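(* If the action of $H$ on $X$ is weakly admissible (with respect to $\lambda$), then there exists a Borel function $\varphi:X\to[0,\infty)$ with $\varphi\in L^1(X,\lambda)$ and $0<\int_H\varphi(\xi.h)\,dh\le 1$ for $\lambda$-almost every $\xi\in X$.
   Context: $X$ is a standard Borel space; $H$ is a second countable locally compact group with left Haar measure $dh$, acting on $X$ from the right, $(\xi,h)\mapsto\xi.h$, jointly measurably. $\lambda$ is a $\sigma$-finite Borel measure on $X$ which is quasi-invariant, i.e. for each $h\in H$ the measure $B\mapsto\lambda(B.h)$ is equivalent to $\lambda$. The action is called weakly admissible if there exists a Borel function $\varphi:X\to[0,\infty)$ with $0<\int_H\varphi(\xi.h)\,dh<\infty$ for $\lambda$-almost every $\xi\in X$. *)

theory Defs
  imports "HOL-Analysis.Analysis"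
begin

text \<open>The group H is a type of class topological_group_add (written additively,
  not necessarily commutative: g + h is the group product gh), Hausdorff,
  second countable and locally compact.  The standard Borel space X is
  modelled as a Polish space type carrying its Borel sigma-algebra.\<close>

definition locally_compact_group :: "'h::{topological_group_add,t2_space} itself \<Rightarrow> bool" where
  "locally_compact_group _ \<longleftrightarrow> locally_compact_space (euclidean :: 'h topology)"

text \<open>Left Haar measure: a nonzero left-invariant Borel measure that is finite on
  compact sets and positive on nonempty open sets (Radon, as regularity is
  automatic on second countable locally compact spaces).\<close>

definition left_haar_measure :: "'h::{topological_group_add,t2_space} measure \<Rightarrow> bool" where
  "left_haar_measure \<mu> \<longleftrightarrow>
     sets \<mu> = sets borel \<and>
     (\<forall>g A. A \<in> sets borel \<longrightarrow> emeasure \<mu> ((\<lambda>x. g + x) ` A) = emeasure \<mu> A) \<and>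
     (\<forall>K. compact K \<longrightarrow> emeasure \<mu> K < \<infinity>) \<and>
     (\<forall>U. open U \<and> U \<noteq> {} \<longrightarrow> emeasure \<mu> U > 0)"

text \<open>Jointly measurable right action: \<open>act \<xi> h\<close> stands for \<xi>.h.\<close>

definition measurable_right_action :: "('x::topological_space \<Rightarrow> 'h::{topological_group_add} \<Rightarrow> 'x) \<Rightarrow> bool" where
  "measurable_right_action act \<longleftrightarrow>
     (\<forall>\<xi>. act \<xi> 0 = \<xi>) \<and>
     (\<forall>\<xi> g h. act (act \<xi> g) h = act \<xi> (g + h)) \<and>
     (\<lambda>p. act (fst p) (snd p)) \<in> borel_measurable (borel \<Otimes>\<^sub>M borel)"

definition quasi_invariant :: "'x::topological_space measure \<Rightarrow> ('x \<Rightarrow> 'h \<Rightarrow> 'x) \<Rightarrow> bool" where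
  "quasi_invariant lam act \<longleftrightarrow>
     (\<forall>h B. B \<in> sets borel \<longrightarrow>
        (emeasure lam ((\<lambda>\<xi>. act \<xi> h) ` B) = 0 \<longleftrightarrow> emeasure lam B = 0))"

definition weakly_admissible :: "'x::topological_space measure \<Rightarrow> 'h measure \<Rightarrow> ('x \<Rightarrow> 'h \<Rightarrow> 'x) \<Rightarrow> bool" where
  "weakly_admissible lam \<mu> act \<longleftrightarrow>
     (\<exists>\<phi> :: 'x \<Rightarrow> real. \<phi> \<in> borel_measurable borel \<and> (\<forall>\<xi>. 0 \<le> \<phi> \<xi>) \<and>
        (AE \<xi> in lam. 0 < (\<integral>\<^sup>+ h. ennreal (\<phi> (act \<xi> h)) \<partial>\<mu>) \<and>
                       (\<integral>\<^sup>+ h. ennreal (\<phi> (act \<xi> h)) \<partial>\<mu>) < \<infinity>))"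

end

theory Submission
  imports Defs
begin

lemma haar_sigma_finite:
  fixes \<mu> :: "'h::{topological_group_add,t2_space,second_countable_topology} measure"
  assumes lc: "locally_compact_group TYPE('h)" and H: "left_haar_measure \<mu>"
  shows "sigma_finite_measure \<mu>"
proof -
  obtain B :: "'h set set" where cB: "countable B" and tB: "topological_basis B"
    using ex_countable_basis by blast
  define B' where "B' = {b\<in>B. \<exists>K. compact K \<and> b \<subseteq> K}"
  have sets: "sets \<mu> = sets borel" using H unfolding left_haar_measure_def by auto
  have "\<Union>B' = UNIV"
  proof (safe)
    fix x :: 'h
    obtain U K where "open U" "compact K" "x \<in> U" "U \<subseteq> K"
      using lc unfolding locally_compact_group_def locally_compact_space_def by (auto simp: compactin_euclidean_iff) blast
    then obtain b where "b \<in> B" "x \<in> b" "b \<subseteq> U"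
      using tB \<open>x \<in> U\<close> by (meson topological_basisE)
    then show "x \<in> \<Union>B'" unfolding B'_def using \<open>U \<subseteq> K\<close> \<open>compact K\<close> by blast
  qed auto
  moreover have "countable B'" using cB unfolding B'_def by auto
  moreover have "B' \<subseteq> sets \<mu>" using tB unfolding B'_def sets
    by (auto intro!: borel_open simp: topological_basis_open)
  moreover have "\<forall>a\<in>B'. emeasure \<mu> a \<noteq> \<infinity>"
  proof
    fix a assume "a \<in> B'"
    then obtain K where "compact K" "a \<subseteq> K" "a \<in> sets \<mu>" using \<open>B' \<subseteq> sets \<mu>\<close> unfolding B'_def by auto
    then have "emeasure \<mu> a \<le> emeasure \<mu> K"
      by (intro emeasure_mono) (auto simp: sets intro: borel_compact)
    also have "\<dots> < \<infinity>" using H \<open>compact K\<close> unfolding left_haar_measure_def by auto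
    finally show "emeasure \<mu> a \<noteq> \<infinity>" by auto
  qed
  ultimately show ?thesis unfolding sigma_finite_measure_def
    using sets_eq_imp_space_eq[OF sets] by (intro exI[of _ B']) auto
qed


lemma haar_shift:
  fixes \<mu> :: "'h::{topological_group_add,t2_space,second_countable_topology} measure"
  assumes H: "left_haar_measure \<mu>"
  shows "distr \<mu> borel (\<lambda>h. g + h) = \<mu>"
proof -
  have sets: "sets \<mu> = sets borel" using H unfolding left_haar_measure_def by auto
  have sp: "space \<mu> = UNIV" using sets_eq_imp_space_eq[OF sets] by simp
  have meas: "(\<lambda>h. g + h) \<in> measurable \<mu> borel"
    unfolding measurable_cong_sets[OF sets refl]
    by (intro borel_measurable_continuous_onI continuous_intros)
  show ?thesis
  proof (rule measure_eqI)
    show "sets (distr \<mu> borel ((+) g)) = sets \<mu>" using sets by simp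
    fix A assume "A \<in> sets (distr \<mu> borel ((+) g))"
    then have A: "A \<in> sets borel" by simp
    have "(\<lambda>h. g + h) -` A \<inter> space \<mu> = (\<lambda>a. - g + a) ` A"
      proof (safe)
      fix x assume "g + x \<in> A"
      then show "x \<in> (\<lambda>a. - g + a) ` A"
        by (intro image_eqI[of _ _ "g + x"]) (auto simp: add.assoc[symmetric])
    qed (auto simp: sp add.assoc[symmetric])
    then show "emeasure (distr \<mu> borel ((+) g)) A = emeasure \<mu> A"
      using H A unfolding left_haar_measure_def
      by (simp add: emeasure_distr[OF meas A])
  qed
qed


theorem mainTheorem4:
  fixes act :: "'x::polish_space \<Rightarrow> 'h::{topological_group_add,t2_space,second_countable_topology} \<Rightarrow> 'x"
    and \<mu> :: "'h measure" and lam :: "'x measure"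
  assumes "locally_compact_group TYPE('h)"
    and "left_haar_measure \<mu>"
    and "measurable_right_action act"
    and "sets lam = sets borel"
    and "sigma_finite_measure lam"
    and "quasi_invariant lam act"
    and "weakly_admissible lam \<mu> act"
  shows "\<exists>\<phi> :: 'x \<Rightarrow> real. \<phi> \<in> borel_measurable borel \<and> (\<forall>\<xi>. 0 \<le> \<phi> \<xi>) \<and>
           integrable lam \<phi> \<and>
           (AE \<xi> in lam. 0 < (\<integral>\<^sup>+ h. ennreal (\<phi> (act \<xi> h)) \<partial>\<mu>) \<and>
                          (\<integral>\<^sup>+ h. ennreal (\<phi> (act \<xi> h)) \<partial>\<mu>) \<le> 1)"
proof -
  note lc = assms(1) and H = assms(2) and A = assms(3) and slam = assms(4)
  interpret mu: sigma_finite_measure \<mu> using haar_sigma_finite[OF lc H] .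
  interpret lam: sigma_finite_measure lam by fact
  have smu: "sets \<mu> = sets borel" using H unfolding left_haar_measure_def by auto
  have spmu: "space \<mu> = UNIV" using sets_eq_imp_space_eq[OF smu] by simp
  have splam: "space lam = UNIV" using sets_eq_imp_space_eq[OF slam] by simp
  obtain \<phi> :: "'x \<Rightarrow> real" where phim[measurable]: "\<phi> \<in> borel_measurable borel"
    and phi0: "\<And>\<xi>. 0 \<le> \<phi> \<xi>"
    and phiAE: "AE \<xi> in lam. 0 < (\<integral>\<^sup>+ h. ennreal (\<phi> (act \<xi> h)) \<partial>\<mu>) \<and>
                       (\<integral>\<^sup>+ h. ennreal (\<phi> (act \<xi> h)) \<partial>\<mu>) < \<infinity>"
    using assms(7) unfolding weakly_admissible_def by blast
  have actm: "(\<lambda>p. act (fst p) (snd p)) \<in> borel_measurable (borel \<Otimes>\<^sub>M borel)"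
    using A unfolding measurable_right_action_def by auto
  have act0: "\<And>\<xi> g h. act (act \<xi> g) h = act \<xi> (g + h)"
    using A unfolding measurable_right_action_def by auto
  have actm2: "(\<lambda>p. act (fst p) (snd p)) \<in> borel_measurable (borel \<Otimes>\<^sub>M \<mu>)"
    using actm by (subst measurable_cong_sets[OF sets_pair_measure_cong[OF refl smu] refl])
  have acth: "(\<lambda>h. act \<xi> h) \<in> borel_measurable \<mu>" for \<xi>
    using measurable_compose[OF measurable_Pair1'[of \<xi> borel \<mu>] actm2] by simp
  define \<Phi> where "\<Phi> \<xi> = (\<integral>\<^sup>+ h. ennreal (\<phi> (act \<xi> h)) \<partial>\<mu>)" for \<xi>
  have Phim[measurable]: "\<Phi> \<in> borel_measurable borel"
    unfolding \<Phi>_def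
  proof (rule mu.borel_measurable_nn_integral)
    show "(\<lambda>(\<xi>, h). ennreal (\<phi> (act \<xi> h))) \<in> borel_measurable (borel \<Otimes>\<^sub>M \<mu>)"
      using measurable_compose[OF actm2 phim] by (simp add: case_prod_beta')
  qed
  have Phi_inv: "\<Phi> (act \<xi> g) = \<Phi> \<xi>" for \<xi> g
  proof -
    have "\<Phi> \<xi> = (\<integral>\<^sup>+ h. ennreal (\<phi> (act \<xi> h)) \<partial>distr \<mu> borel (\<lambda>h. g + h))"
      unfolding \<Phi>_def haar_shift[OF H] ..
    also have "\<dots> = (\<integral>\<^sup>+ h. ennreal (\<phi> (act \<xi> (g + h))) \<partial>\<mu>)"
    proof -
      have m1: "(\<lambda>h. g + h) \<in> measurable \<mu> borel"
        unfolding measurable_cong_sets[OF smu refl]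
        by (intro borel_measurable_continuous_onI continuous_intros)
      have "(\<lambda>h. \<phi> (act \<xi> h)) \<in> borel_measurable borel"
        using measurable_compose[OF acth[of \<xi>, unfolded measurable_cong_sets[OF smu refl]] phim] .
      then have m2: "(\<lambda>h. ennreal (\<phi> (act \<xi> h))) \<in> borel_measurable borel" by measurable
      have m3: "(\<lambda>h. ennreal (\<phi> (act \<xi> h))) \<in> borel_measurable (distr \<mu> borel (\<lambda>h. g + h))"
        using m2 by simp
      show ?thesis using nn_integral_distr[OF m1 m3] .
    qed
    finally show ?thesis unfolding \<Phi>_def act0 by simp
  qed
  define G where "G = {\<xi>. 0 < \<Phi> \<xi> \<and> \<Phi> \<xi> < \<infinity>}"
  have Gm[measurable]: "G \<in> sets borel" unfolding G_def by measurable
  have G_inv: "act \<xi> h \<in> G \<longleftrightarrow> \<xi> \<in> G" for \<xi> h unfolding G_def using Phi_inv[of \<xi> h] by simp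
  define \<psi> where "\<psi> \<xi> = (if \<xi> \<in> G then \<phi> \<xi> / enn2real (\<Phi> \<xi>) else 0)" for \<xi>
  have psim[measurable]: "\<psi> \<in> borel_measurable borel" unfolding \<psi>_def by measurable
  have psi0: "0 \<le> \<psi> \<xi>" for \<xi> unfolding \<psi>_def using phi0 by auto
  have psi1: "(\<integral>\<^sup>+ h. ennreal (\<psi> (act \<xi> h)) \<partial>\<mu>) = 1" if "\<xi> \<in> G" for \<xi>
  proof -
    define c where "c = enn2real (\<Phi> \<xi>)"
    have Pc: "\<Phi> \<xi> = ennreal c" and c0: "c > 0" using that unfolding G_def c_def
      by (auto simp: ennreal_enn2real_if enn2real_positive_iff)
    have "(\<integral>\<^sup>+ h. ennreal (\<psi> (act \<xi> h)) \<partial>\<mu>) = (\<integral>\<^sup>+ h. ennreal (\<phi> (act \<xi> h)) * ennreal (1 / c) \<partial>\<mu>)"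
      unfolding \<psi>_def G_inv Phi_inv using that c0 phi0
      by (intro nn_integral_cong) (auto simp: c_def ennreal_mult[symmetric])
    also have "\<dots> = \<Phi> \<xi> * ennreal (1 / c)"
      unfolding \<Phi>_def by (rule nn_integral_multc) (measurable, rule acth)
    also have "\<dots> = 1" using c0 by (simp add: Pc ennreal_mult[symmetric])
    finally show ?thesis .
  qed
  obtain w where wm: "w \<in> borel_measurable lam" and wint: "integral\<^sup>N lam w \<noteq> \<infinity>"
    and wpos: "\<And>x. 0 < w x \<and> w x < \<infinity>"
    using lam.Ex_finite_integrable_function splam by auto
  have wm'[measurable]: "w \<in> borel_measurable borel" using wm unfolding measurable_cong_sets[OF slam refl] .
  define \<rho> where "\<rho> \<xi> = min (\<psi> \<xi>) (enn2real (w \<xi>))" for \<xi>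
  have chim[measurable]: "\<rho> \<in> borel_measurable borel" unfolding \<rho>_def by measurable
  have chi0: "0 \<le> \<rho> \<xi>" for \<xi> unfolding \<rho>_def using psi0 by auto
  have chi_zero: "\<rho> \<xi> = 0 \<longleftrightarrow> \<psi> \<xi> = 0" for \<xi>
  proof -
    have "enn2real (w \<xi>) > 0" using wpos[of \<xi>] by (simp add: enn2real_positive_iff)
    then show ?thesis unfolding \<rho>_def using psi0[of \<xi>] by (auto simp: min_def)
  qed
  have chim_lam: "\<rho> \<in> borel_measurable lam" using chim unfolding measurable_cong_sets[OF slam refl] .
  have "integrable lam \<rho>"
  proof (rule integrableI_bounded[OF chim_lam])
    have "(\<integral>\<^sup>+ x. ennreal (norm (\<rho> x)) \<partial>lam) \<le> (\<integral>\<^sup>+ x. w x \<partial>lam)"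
    proof (rule nn_integral_mono)
      fix x
      have "ennreal (norm (\<rho> x)) \<le> ennreal (enn2real (w x))"
        using chi0[of x] by (intro ennreal_leI) (auto simp: \<rho>_def)
      also have "\<dots> = w x" using wpos[of x] by (auto simp: ennreal_enn2real_if)
      finally show "ennreal (norm (\<rho> x)) \<le> w x" .
    qed
    then show "(\<integral>\<^sup>+ x. ennreal (norm (\<rho> x)) \<partial>lam) < \<infinity>" using wint by (simp add: top.not_eq_extremum le_less_trans)
  qed
  moreover have "AE \<xi> in lam. 0 < (\<integral>\<^sup>+ h. ennreal (\<rho> (act \<xi> h)) \<partial>\<mu>) \<and>
                          (\<integral>\<^sup>+ h. ennreal (\<rho> (act \<xi> h)) \<partial>\<mu>) \<le> 1"
    using phiAE
  proof (rule AE_mp, intro AE_I2 impI conjI)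
    fix \<xi> assume "0 < (\<integral>\<^sup>+ h. ennreal (\<phi> (act \<xi> h)) \<partial>\<mu>) \<and> (\<integral>\<^sup>+ h. ennreal (\<phi> (act \<xi> h)) \<partial>\<mu>) < \<infinity>"
    then have G: "\<xi> \<in> G" unfolding G_def \<Phi>_def by auto
    have "(\<integral>\<^sup>+ h. ennreal (\<rho> (act \<xi> h)) \<partial>\<mu>) \<le> (\<integral>\<^sup>+ h. ennreal (\<psi> (act \<xi> h)) \<partial>\<mu>)"
      by (intro nn_integral_mono ennreal_leI) (simp add: \<rho>_def)
    then show "(\<integral>\<^sup>+ h. ennreal (\<rho> (act \<xi> h)) \<partial>\<mu>) \<le> 1" using psi1[OF G] by simp
    show "0 < (\<integral>\<^sup>+ h. ennreal (\<rho> (act \<xi> h)) \<partial>\<mu>)"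
    proof (rule ccontr)
      assume "\<not> ?thesis"
      then have "(\<integral>\<^sup>+ h. ennreal (\<rho> (act \<xi> h)) \<partial>\<mu>) = 0" by (simp add: not_gr_zero)
      then have "AE h in \<mu>. ennreal (\<rho> (act \<xi> h)) = 0"
        by (subst (asm) nn_integral_0_iff_AE) (measurable, rule acth)
      then have "AE h in \<mu>. ennreal (\<phi> (act \<xi> h)) = 0"
      proof (rule AE_mp, intro AE_I2 impI)
        fix h assume "ennreal (\<rho> (act \<xi> h)) = 0"
        then have "\<rho> (act \<xi> h) = 0" using chi0 by simp
        then have "\<psi> (act \<xi> h) = 0" using chi_zero by simp
        then show "ennreal (\<phi> (act \<xi> h)) = 0"
          using G G_inv[of \<xi> h] Phi_inv[of \<xi> h] unfolding \<psi>_def G_def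
          by (auto simp: enn2real_positive_iff enn2real_eq_0_iff)
      qed
      then have "\<Phi> \<xi> = 0" unfolding \<Phi>_def
        by (subst nn_integral_0_iff_AE) (measurable, rule acth)
      then show False using G unfolding G_def by simp
    qed
  qed
  ultimately show ?thesis using chim chi0 by blast
qed

end
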